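(* Let $(\mathbf X,\mathbf Y)$ be a general correlated source which is uniformly integrable and satisfies the conditional strong converse property $\underline H(\mathbf X|\mathbf Y)=\overline H(\mathbf X|\mathbf Y)$. Then the limit $H(\mathbf X|\mathbf Y)=\lim_{n\to\infty}\frac1nH(X^n|Y^n)$ exists, and for any $\varepsilon\in(0,1)$, \[\lim_{n\to\infty}\frac1n\overline H_s^\varepsilon(X^n|Y^n)=H(\mathbf X|\mathbf Y).\]
   Context: A general correlated source $(\mathbf X,\mathbf Y)=\{(X^n,Y^n)\}_{n\ge1}$ is an arbitrary sequence of pairs of random variables on $\mathcal X^n\times\mathcal Y^n$, $\mathcal X,\mathcal Y$ finite or countably infinite (no structural assumptions; marginal probabilities positive). Logs base 2. Uniformly integrable: $Z_n=\frac1n\log\frac1{P_{X^n|Y^n}(X^n|Y^n)}$ satisfies $\lim_{u\to\infty}\sup_n\sum_{z:|z|\ge u}P_{Z_n}(z)|z|=0$. $\overline H(\mathbf X|\mathbf Y)=\inf\{\alpha:\lim_n\Pr\{Z_n>\alpha\}=0\}$, $\underline H(\mathbf X|\mathbf Y)=\sup\{\beta:\lim_n\Pr\{Z_n<\beta\}=0\}$. For $x^n$ and $\varepsilon\in(0,1]$, $\overline h^\varepsilon(x^n)=\inf\{a\in\mathbb R:\sum_{y^n:\log(1/P_{X^n|Y^n}(x^n|y^n))>a}P_{Y^n|X^n}(y^n|x^n)\le\varepsilon\}$ and $\overline H_s^\varepsilon(X^n|Y^n)=\sum_{x^n}P_{X^n}(x^n)\overline h^\varepsilon(x^n)$. *)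

theory Defs
  imports "HOL-Probability.Probability"
begin

text \<open>A general correlated source: for each n a joint distribution P n of (X^n, Y^n)
  on sequences of length n over countable alphabets 'a and 'b.\<close>

definition general_source :: "(nat \<Rightarrow> ('a list \<times> 'b list) pmf) \<Rightarrow> bool" where
  "general_source P \<longleftrightarrow> (\<forall>n. set_pmf (P n) \<subseteq> {(x, y). length x = n \<and> length y = n})"

definition pX :: "('a \<times> 'b) pmf \<Rightarrow> 'a \<Rightarrow> real" where
  "pX Q x = pmf (map_pmf fst Q) x"

definition pY :: "('a \<times> 'b) pmf \<Rightarrow> 'b \<Rightarrow> real" where
  "pY Q y = pmf (map_pmf snd Q) y"

definition condXY :: "('a \<times> 'b) pmf \<Rightarrow> 'a \<Rightarrow> 'b \<Rightarrow> real" where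
  "condXY Q x y = pmf Q (x, y) / pY Q y"

definition condYX :: "('a \<times> 'b) pmf \<Rightarrow> 'b \<Rightarrow> 'a \<Rightarrow> real" where
  "condYX Q y x = pmf Q (x, y) / pX Q x"

definition Zn :: "(nat \<Rightarrow> ('a \<times> 'b) pmf) \<Rightarrow> nat \<Rightarrow> ('a \<times> 'b) \<Rightarrow> real" where
  "Zn P n = (\<lambda>(x, y). (1 / real n) * log 2 (1 / condXY (P n) x y))"

text \<open>Uniform integrability: lim_{u\<rightarrow>\<infinity>} sup_n \<Sum>_{|z|\<ge>u} P_{Z_n}(z)|z| = 0
  (the sum over z is the (possibly infinite) expectation of |Z_n| on {|Z_n| \<ge> u}).\<close>
definition uniformly_integrable :: "(nat \<Rightarrow> ('a \<times> 'b) pmf) \<Rightarrow> bool" where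
  "uniformly_integrable P \<longleftrightarrow>
     ((\<lambda>u::real. SUP n\<in>{1..}. \<integral>\<^sup>+ z. ennreal (\<bar>z\<bar> * indicator {z. \<bar>z\<bar> \<ge> u} z)
                                    \<partial>measure_pmf (map_pmf (Zn P n) (P n)))
        \<longlongrightarrow> 0) at_top"

definition spec_sup_cond_entropy :: "(nat \<Rightarrow> ('a \<times> 'b) pmf) \<Rightarrow> ereal" where
  "spec_sup_cond_entropy P =
     Inf {ereal \<alpha> | \<alpha>. (\<lambda>n. measure_pmf.prob (P n) {\<omega>. Zn P n \<omega> > \<alpha>}) \<longlonglongrightarrow> 0}"

definition spec_inf_cond_entropy :: "(nat \<Rightarrow> ('a \<times> 'b) pmf) \<Rightarrow> ereal" where
  "spec_inf_cond_entropy P =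
     Sup {ereal \<beta> | \<beta>. (\<lambda>n. measure_pmf.prob (P n) {\<omega>. Zn P n \<omega> < \<beta>}) \<longlonglongrightarrow> 0}"

definition cond_entropy :: "('a \<times> 'b) pmf \<Rightarrow> real" where
  "cond_entropy Q = measure_pmf.expectation Q (\<lambda>(x, y). log 2 (1 / condXY Q x y))"

definition hbar :: "real \<Rightarrow> ('a \<times> 'b) pmf \<Rightarrow> 'a \<Rightarrow> real" where
  "hbar \<epsilon> Q x = Inf {a. (\<Sum>\<^sub>\<infinity> y\<in>{y. log 2 (1 / condXY Q x y) > a}. condYX Q y x) \<le> \<epsilon>}"

definition smooth_Hs :: "real \<Rightarrow> ('a \<times> 'b) pmf \<Rightarrow> real" where
  "smooth_Hs \<epsilon> Q = (\<Sum>\<^sub>\<infinity> x. pX Q x * hbar \<epsilon> Q x)"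

end

theory Submission imports Defs begin

lemma infsum_nonneg_enn:
  fixes f :: "'a \<Rightarrow> real"
  assumes nn: "\<And>x. x \<in> A \<Longrightarrow> 0 \<le> f x"
  shows "infsum f A = enn2real (\<integral>\<^sup>+x. ennreal (f x) \<partial>count_space A)"
proof (cases "f summable_on A")
  case True
  have "(\<lambda>x. norm (f x)) summable_on A"
    using True by (rule summable_on_cong[THEN iffD1, rotated]) (simp add: nn)
  then have "Infinite_Sum.abs_summable_on f A" by simp
  then have as: "Infinite_Set_Sum.abs_summable_on f A" using abs_summable_equivalent by blast
  then have "infsetsum f A = infsum f A" by (rule infsetsum_infsum)
  moreover have "(\<integral>\<^sup>+x. ennreal (f x) \<partial>count_space A) = ennreal (infsetsum f A)"
    using as nn by (rule nn_integral_conv_infsetsum)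
  moreover have "0 \<le> infsetsum f A" using nn by (simp add: infsetsum_nonneg)
  ultimately show ?thesis by simp
next
  case False
  have "(\<integral>\<^sup>+x. ennreal (f x) \<partial>count_space A) = \<infinity>"
  proof (rule ccontr)
    assume "(\<integral>\<^sup>+x. ennreal (f x) \<partial>count_space A) \<noteq> \<infinity>"
    moreover have "(\<integral>\<^sup>+x. ennreal (norm (f x)) \<partial>count_space A) = (\<integral>\<^sup>+x. ennreal (f x) \<partial>count_space A)"
      by (rule nn_integral_cong) (simp add: nn)
    ultimately have "integrable (count_space A) f"
      by (intro integrableI_bounded) (auto simp: top.not_eq_extremum)
    then have "Infinite_Set_Sum.abs_summable_on f A" by (simp add: abs_summable_on_def)
    then have "Infinite_Sum.abs_summable_on f A" using abs_summable_equivalent by blast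
    then have "(\<lambda>x. norm (f x)) summable_on A" by simp
    then have "f summable_on A"
      by (rule summable_on_cong[THEN iffD1, rotated]) (simp add: nn)
    with False show False by simp
  qed
  then show ?thesis using False by (simp add: infsum_not_exists)
qed


definition LL :: "('a \<times> 'b) pmf \<Rightarrow> 'a \<times> 'b \<Rightarrow> real" where
  "LL Q = (\<lambda>(x, y). log 2 (1 / condXY Q x y))"

lemma pmf_le_pY: "pmf Q (x, y) \<le> pY Q y"
proof -
  have "pmf Q (x, y) = measure Q {(x, y)}" by (simp add: measure_pmf_single)
  also have "\<dots> \<le> measure Q (snd -` {y})"
    by (rule measure_pmf.finite_measure_mono) auto
  also have "\<dots> = pY Q y" by (simp add: pY_def pmf_map)
  finally show ?thesis .
qed

lemma LL_nonneg: "0 \<le> LL Q \<omega>"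
proof -
  obtain x y where w: "\<omega> = (x, y)" by (cases \<omega>)
  show ?thesis
  proof (cases "pmf Q (x, y) = 0")
    case True then show ?thesis by (simp add: w LL_def condXY_def log_def)
  next
    case False
    then have q: "0 < pmf Q (x, y)" using pmf_nonneg[of Q "(x,y)"] by linarith
    have "pmf Q (x, y) \<le> pY Q y" by (rule pmf_le_pY)
    then have "0 < condXY Q x y" "condXY Q x y \<le> 1" using q
      by (auto simp: condXY_def field_simps)
    then have "1 \<le> 1 / condXY Q x y" by (simp add: field_simps)
    then have "0 \<le> log 2 (1 / condXY Q x y)" using zero_le_log_cancel_iff[of 2 "1 / condXY Q x y"] \<open>0 < condXY Q x y\<close> by simp
    then show ?thesis by (simp add: w LL_def)
  qed
qed

lemma pX_sum: "ennreal (pX Q x) = (\<integral>\<^sup>+y. ennreal (pmf Q (x, y)) \<partial>count_space UNIV)"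
proof -
  have "ennreal (pX Q x) = (\<integral>\<^sup>+\<omega>. indicator (fst -` {x}) \<omega> \<partial>measure_pmf Q)"
    unfolding pX_def by (rule ennreal_pmf_map)
  also have "\<dots> = (\<integral>\<^sup>+\<omega>. ennreal (pmf Q \<omega>) * indicator (fst -` {x}) \<omega> \<partial>count_space UNIV)"
    by (rule nn_integral_measure_pmf)
  also have "\<dots> = (\<integral>\<^sup>+x'. \<integral>\<^sup>+y. ennreal (pmf Q (x', y)) * indicator (fst -` {x}) (x', y) \<partial>count_space UNIV \<partial>count_space UNIV)"
    by (rule nn_integral_fst_count_space[symmetric])
  also have "\<dots> = (\<integral>\<^sup>+x'. (\<integral>\<^sup>+y. ennreal (pmf Q (x', y)) \<partial>count_space UNIV) * indicator {x} x' \<partial>count_space UNIV)"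
    by (rule nn_integral_cong) (auto split: split_indicator)
  also have "\<dots> = (\<integral>\<^sup>+y. ennreal (pmf Q (x, y)) \<partial>count_space UNIV)"
    by simp
  finally show ?thesis .
qed

lemma sum_split:
  "(\<integral>\<^sup>+\<omega>. ennreal (pmf Q \<omega>) * (g (fst \<omega>) * h \<omega>) \<partial>count_space UNIV) =
   (\<integral>\<^sup>+x. g x * (\<integral>\<^sup>+y. ennreal (pmf Q (x, y)) * h (x, y) \<partial>count_space UNIV) \<partial>count_space UNIV)"
proof -
  have "(\<integral>\<^sup>+\<omega>. ennreal (pmf Q \<omega>) * (g (fst \<omega>) * h \<omega>) \<partial>count_space UNIV) =
     (\<integral>\<^sup>+x. \<integral>\<^sup>+y. ennreal (pmf Q (x, y)) * (g x * h (x, y)) \<partial>count_space UNIV \<partial>count_space UNIV)"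
    by (subst nn_integral_fst_count_space[symmetric]) simp
  also have "\<dots> = (\<integral>\<^sup>+x. \<integral>\<^sup>+y. g x * (ennreal (pmf Q (x, y)) * h (x, y)) \<partial>count_space UNIV \<partial>count_space UNIV)"
    by (simp add: ac_simps)
  also have "\<dots> = (\<integral>\<^sup>+x. g x * (\<integral>\<^sup>+y. ennreal (pmf Q (x, y)) * h (x, y) \<partial>count_space UNIV) \<partial>count_space UNIV)"
    by (subst nn_integral_cmult) auto
  finally show ?thesis .
qed

lemma infsum_condYX:
  assumes p: "0 < pX Q x"
  shows "infsum (\<lambda>y. condYX Q y x) S =
    enn2real (\<integral>\<^sup>+y. ennreal (pmf Q (x, y)) * indicator S y \<partial>count_space UNIV) / pX Q x"
proof -
  have "infsum (\<lambda>y. condYX Q y x) S = enn2real (\<integral>\<^sup>+y. ennreal (condYX Q y x) \<partial>count_space S)"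
    by (rule infsum_nonneg_enn) (simp add: condYX_def p less_imp_le)
  also have "(\<integral>\<^sup>+y. ennreal (condYX Q y x) \<partial>count_space S) =
     (\<integral>\<^sup>+y. (ennreal (pmf Q (x, y)) * indicator S y) * ennreal (1 / pX Q x) \<partial>count_space UNIV)"
    by (subst nn_integral_count_space_indicator)
       (auto intro!: nn_integral_cong simp: condYX_def ennreal_mult'[symmetric] split: split_indicator)
  also have "\<dots> = (\<integral>\<^sup>+y. ennreal (pmf Q (x, y)) * indicator S y \<partial>count_space UNIV) * ennreal (1 / pX Q x)"
    by (rule nn_integral_multc) simp
  finally show ?thesis using p by (simp add: enn2real_mult)
qed


definition Aset :: "('a \<times> 'b) pmf \<Rightarrow> 'a \<Rightarrow> real \<Rightarrow> ennreal" where
  "Aset Q x a = (\<integral>\<^sup>+y. ennreal (pmf Q (x, y)) * indicator {y. a < LL Q (x, y)} y \<partial>count_space UNIV)"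

definition Mx :: "('a \<times> 'b) pmf \<Rightarrow> 'a \<Rightarrow> ennreal" where
  "Mx Q x = (\<integral>\<^sup>+y. ennreal (pmf Q (x, y)) * ennreal (LL Q (x, y)) \<partial>count_space UNIV)"

lemma Aset_le: "Aset Q x a \<le> ennreal (pX Q x)"
  unfolding Aset_def pX_sum
  by (rule nn_integral_mono) (auto split: split_indicator)

lemma Aset_neg: "a < 0 \<Longrightarrow> Aset Q x a = ennreal (pX Q x)"
  unfolding Aset_def pX_sum
  by (rule nn_integral_cong) (auto split: split_indicator intro: less_le_trans[OF _ LL_nonneg])

lemma Aset_mono: "a \<le> a' \<Longrightarrow> Aset Q x a' \<le> Aset Q x a"
  unfolding Aset_def
  by (rule nn_integral_mono) (auto split: split_indicator intro: mult_left_mono)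

lemma Aset_Markov: "0 < a \<Longrightarrow> ennreal a * Aset Q x a \<le> Mx Q x"
proof -
  assume a: "0 < a"
  have "ennreal a * Aset Q x a = (\<integral>\<^sup>+y. ennreal a * (ennreal (pmf Q (x, y)) * indicator {y. a < LL Q (x, y)} y) \<partial>count_space UNIV)"
    unfolding Aset_def by (rule nn_integral_cmult[symmetric]) simp
  also have "\<dots> \<le> Mx Q x"
    unfolding Mx_def
  proof (rule nn_integral_mono)
    fix y
    show "ennreal a * (ennreal (pmf Q (x, y)) * indicator {y. a < LL Q (x, y)} y) \<le> ennreal (pmf Q (x, y)) * ennreal (LL Q (x, y))"
    proof (cases "a < LL Q (x, y)")
      case True
      then have "ennreal a \<le> ennreal (LL Q (x, y))" by (intro ennreal_leI) simp
      then have "ennreal (pmf Q (x, y)) * ennreal a \<le> ennreal (pmf Q (x, y)) * ennreal (LL Q (x, y))"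
        by (rule mult_left_mono) simp
      then show ?thesis using True by (simp add: mult.commute)
    qed simp
  qed
  finally show ?thesis .
qed

lemma pX_nonneg[simp]: "0 \<le> pX Q x" by (simp add: pX_def)

lemma Aset_fin[simp]: "Aset Q x a < \<top>"
  using Aset_le[of Q x a] by (rule le_less_trans) simp

lemma enn2real_Aset: "enn2real (Aset Q x a) \<le> pX Q x"
  using Aset_le[of Q x a] by (intro enn2real_leI) auto

lemma hbar_eq:
  assumes p: "0 < pX Q x"
  shows "hbar \<epsilon> Q x = Inf {a. enn2real (Aset Q x a) / pX Q x \<le> \<epsilon>}"
proof -
  have "\<And>a. {y. log 2 (1 / condXY Q x y) > a} = {y. a < LL Q (x, y)}"
    by (auto simp: LL_def)
  then show ?thesis unfolding hbar_def
    by (simp add: infsum_condYX[OF p] Aset_def)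
qed

context
  fixes Q :: "('a \<times> 'b) pmf" and x :: 'a and \<epsilon> :: real
  assumes p: "0 < pX Q x" and e0: "0 < \<epsilon>" and e1: "\<epsilon> < 1" and Mfin: "Mx Q x < \<infinity>"
begin

private abbreviation "Sx \<equiv> {a. enn2real (Aset Q x a) / pX Q x \<le> \<epsilon>}"

lemma Sx_ge0: "a \<in> Sx \<Longrightarrow> 0 \<le> a"
proof (rule ccontr)
  assume "a \<in> Sx" "\<not> 0 \<le> a"
  then have "enn2real (Aset Q x a) = pX Q x" by (simp add: Aset_neg del: Aset_fin)
  with \<open>a \<in> Sx\<close> p e1 show False by simp
qed

lemma Sx_Markov:
  assumes t: "0 < t"
  shows "enn2real (Mx Q x) / (\<epsilon> * pX Q x) + t \<in> Sx"
proof -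
  define m where "m = enn2real (Mx Q x)"
  define a where "a = m / (\<epsilon> * pX Q x) + t"
  have m0: "0 \<le> m" by (simp add: m_def)
  have a0: "0 < a" unfolding a_def using m0 p e0 t by (simp add: add_nonneg_pos)
  have "ennreal a * Aset Q x a \<le> Mx Q x" using a0 by (rule Aset_Markov)
  then have "enn2real (ennreal a * Aset Q x a) \<le> m"
    unfolding m_def using Mfin by (intro enn2real_mono) auto
  then have am: "a * enn2real (Aset Q x a) \<le> m" using a0 by (simp add: enn2real_mult)
  have "m \<le> a * (\<epsilon> * pX Q x)"
    unfolding a_def using p e0 t by (simp add: field_simps)
  then have "a * enn2real (Aset Q x a) \<le> a * (\<epsilon> * pX Q x)" using am by linarith
  then have "enn2real (Aset Q x a) \<le> \<epsilon> * pX Q x" using a0 by simp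
  then show ?thesis unfolding a_def[symmetric] m_def[symmetric] using p by (simp add: field_simps)
qed

lemma Sx_ne: "Sx \<noteq> {}" using Sx_Markov[of 1] by auto

lemma Sx_bdd: "bdd_below Sx" using Sx_ge0 by (auto simp: bdd_below_def)

lemma hbar_nonneg: "0 \<le> hbar \<epsilon> Q x"
  unfolding hbar_eq[OF p] using Sx_ne Sx_ge0 by (intro cInf_greatest) auto

lemma hbar_upper: "enn2real (Aset Q x b) \<le> \<epsilon> * pX Q x \<Longrightarrow> hbar \<epsilon> Q x \<le> b"
  unfolding hbar_eq[OF p] using Sx_bdd p by (intro cInf_lower) (auto simp: field_simps)

lemma hbar_lower: "\<epsilon> * pX Q x < enn2real (Aset Q x b) \<Longrightarrow> b \<le> hbar \<epsilon> Q x"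
  unfolding hbar_eq[OF p]
proof (intro cInf_greatest[OF Sx_ne])
  fix a assume A: "\<epsilon> * pX Q x < enn2real (Aset Q x b)" and a: "a \<in> Sx"
  show "b \<le> a"
  proof (rule ccontr)
    assume "\<not> b \<le> a"
    then have "Aset Q x b \<le> Aset Q x a" by (intro Aset_mono) simp
    then have "enn2real (Aset Q x b) \<le> enn2real (Aset Q x a)"
      by (intro enn2real_mono) auto
    with A a p show False by (simp add: field_simps)
  qed
qed

lemma hbar_Markov: "pX Q x * hbar \<epsilon> Q x \<le> enn2real (Mx Q x) / \<epsilon>"
proof -
  have "hbar \<epsilon> Q x \<le> enn2real (Mx Q x) / (\<epsilon> * pX Q x)"
  proof (rule field_le_epsilon)
    fix t :: real assume "0 < t"
    then show "hbar \<epsilon> Q x \<le> enn2real (Mx Q x) / (\<epsilon> * pX Q x) + t"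
      unfolding hbar_eq[OF p] using Sx_bdd Sx_Markov by (intro cInf_lower) auto
  qed
  then show ?thesis using p e0 by (simp add: field_simps)
qed

end


lemma int_count_emeasure:
  "(\<integral>\<^sup>+\<omega>. ennreal (pmf Q \<omega>) * indicator T \<omega> \<partial>count_space UNIV) = emeasure (measure_pmf Q) T"
  by (simp add: nn_integral_measure_pmf[symmetric])

lemma int_Iset:
  "(\<integral>\<^sup>+x. (\<integral>\<^sup>+y. ennreal (pmf Q (x, y)) * indicator T (x, y) \<partial>count_space UNIV) \<partial>count_space UNIV)
   = emeasure (measure_pmf Q) T"
  using sum_split[of Q "\<lambda>_. 1" "indicator T"] by (simp add: int_count_emeasure)

lemma Aset_Iset: "Aset Q x b = (\<integral>\<^sup>+y. ennreal (pmf Q (x, y)) * indicator {\<omega>. b < LL Q \<omega>} (x, y) \<partial>count_space UNIV)"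
  unfolding Aset_def by (rule nn_integral_cong) (simp split: split_indicator)

lemma int_Aset: "(\<integral>\<^sup>+x. Aset Q x b \<partial>count_space UNIV) = emeasure (measure_pmf Q) {\<omega>. b < LL Q \<omega>}"
  unfolding Aset_Iset by (rule int_Iset)

lemma int_pX: "(\<integral>\<^sup>+x. ennreal (pX Q x) \<partial>count_space UNIV) = 1"
  using int_Iset[of Q UNIV] by (simp add: pX_sum)

lemma Tot_eq: "(\<integral>\<^sup>+\<omega>. ennreal (LL Q \<omega>) \<partial>measure_pmf Q) = (\<integral>\<^sup>+x. Mx Q x \<partial>count_space UNIV)"
  using sum_split[of Q "\<lambda>_. 1" "\<lambda>\<omega>. ennreal (LL Q \<omega>)"]
  by (simp add: nn_integral_measure_pmf Mx_def)

lemma Mx_le_Tot: "Mx Q x \<le> (\<integral>\<^sup>+\<omega>. ennreal (LL Q \<omega>) \<partial>measure_pmf Q)"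
proof -
  have "Mx Q x = (\<integral>\<^sup>+x'. Mx Q x' * indicator {x} x' \<partial>count_space UNIV)" by simp
  also have "\<dots> \<le> (\<integral>\<^sup>+x'. Mx Q x' \<partial>count_space UNIV)"
    by (rule nn_integral_mono) (simp split: split_indicator)
  finally show ?thesis by (simp add: Tot_eq)
qed

definition SS :: "real \<Rightarrow> ('a \<times> 'b) pmf \<Rightarrow> ennreal" where
  "SS \<epsilon> Q = (\<integral>\<^sup>+x. ennreal (pX Q x * hbar \<epsilon> Q x) \<partial>count_space UNIV)"

context
  fixes Q :: "('a \<times> 'b) pmf" and \<epsilon> :: real
  assumes e0: "0 < \<epsilon>" and e1: "\<epsilon> < 1"
    and Tfin: "(\<integral>\<^sup>+\<omega>. ennreal (LL Q \<omega>) \<partial>measure_pmf Q) < \<infinity>"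
begin

lemma Mfin: "Mx Q x < \<infinity>"
  using Mx_le_Tot[of Q x] Tfin by (rule le_less_trans)

lemma pX_hbar_nonneg: "0 \<le> pX Q x * hbar \<epsilon> Q x"
proof (cases "pX Q x = 0")
  case False
  then have "0 < pX Q x" using pX_nonneg[of Q x] by linarith
  then show ?thesis using hbar_nonneg[OF _ e0 e1 Mfin] by simp
qed simp

lemma smooth_SS: "smooth_Hs \<epsilon> Q = enn2real (SS \<epsilon> Q)"
  unfolding smooth_Hs_def SS_def
  by (rule infsum_nonneg_enn) (simp add: pX_hbar_nonneg)

lemma SS_upper:
  assumes b: "0 \<le> b" and c: "0 \<le> c"
  shows "SS \<epsilon> Q \<le> ennreal b + ennreal (1 / \<epsilon>) *
    ((\<integral>\<^sup>+\<omega>. ennreal (LL Q \<omega>) * indicator {\<omega>. c \<le> LL Q \<omega>} \<omega> \<partial>measure_pmf Q)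
      + ennreal c * (ennreal (1 / \<epsilon>) * emeasure (measure_pmf Q) {\<omega>. b < LL Q \<omega>}))"
proof -
  define Bad where "Bad = {x. \<epsilon> * pX Q x < enn2real (Aset Q x b)}"
  have pw: "ennreal (pX Q x * hbar \<epsilon> Q x) \<le> ennreal (pX Q x) * ennreal b + ennreal (1 / \<epsilon>) * (indicator Bad x * Mx Q x)" for x
  proof (cases "pX Q x = 0")
    case False
    then have p: "0 < pX Q x" using pX_nonneg[of Q x] by linarith
    show ?thesis
    proof (cases "x \<in> Bad")
      case True
      have "pX Q x * hbar \<epsilon> Q x \<le> enn2real (Mx Q x) / \<epsilon>"
        by (rule hbar_Markov[OF p e0 e1 Mfin])
      then have "ennreal (pX Q x * hbar \<epsilon> Q x) \<le> ennreal (enn2real (Mx Q x) / \<epsilon>)"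
        by (rule ennreal_leI)
      also have "\<dots> = ennreal (1 / \<epsilon>) * Mx Q x"
      proof -
        have "ennreal (enn2real (Mx Q x) / \<epsilon>) = ennreal (1 / \<epsilon>) * ennreal (enn2real (Mx Q x))"
          using e0 by (subst ennreal_mult[symmetric]) auto
        then show ?thesis using Mfin[of x] by simp
      qed
      finally show ?thesis using True by (simp add: add_increasing)
    next
      case False
      then have "hbar \<epsilon> Q x \<le> b" unfolding Bad_def
        by (intro hbar_upper[OF p e0 e1 Mfin]) simp
      then have "pX Q x * hbar \<epsilon> Q x \<le> pX Q x * b" using p by (simp add: mult_left_mono)
      then have "ennreal (pX Q x * hbar \<epsilon> Q x) \<le> ennreal (pX Q x) * ennreal b"
        using p by (simp add: ennreal_mult'[symmetric] ennreal_leI)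
      then show ?thesis by (simp add: add_increasing2)
    qed
  qed simp
  have "SS \<epsilon> Q \<le> (\<integral>\<^sup>+x. ennreal (pX Q x) * ennreal b + ennreal (1 / \<epsilon>) * (indicator Bad x * Mx Q x) \<partial>count_space UNIV)"
    unfolding SS_def by (rule nn_integral_mono) (rule pw)
  also have "\<dots> = ennreal b + ennreal (1 / \<epsilon>) * (\<integral>\<^sup>+x. indicator Bad x * Mx Q x \<partial>count_space UNIV)"
    by (simp add: nn_integral_add nn_integral_cmult nn_integral_multc int_pX)
  also have "(\<integral>\<^sup>+x. indicator Bad x * Mx Q x \<partial>count_space UNIV) =
      (\<integral>\<^sup>+\<omega>. ennreal (pmf Q \<omega>) * (indicator Bad (fst \<omega>) * ennreal (LL Q \<omega>)) \<partial>count_space UNIV)"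
    by (subst sum_split) (simp add: Mx_def)
  also have "\<dots> \<le> (\<integral>\<^sup>+\<omega>. ennreal (pmf Q \<omega>) * (ennreal (LL Q \<omega>) * indicator {\<omega>. c \<le> LL Q \<omega>} \<omega>)
        + ennreal c * (ennreal (pmf Q \<omega>) * (indicator Bad (fst \<omega>) * 1)) \<partial>count_space UNIV)"
  proof (rule nn_integral_mono)
    fix \<omega>
    have "indicator Bad (fst \<omega>) * ennreal (LL Q \<omega>) \<le> ennreal (LL Q \<omega>) * indicator {\<omega>. c \<le> LL Q \<omega>} \<omega> + ennreal c * indicator Bad (fst \<omega>)"
      using c by (auto split: split_indicator intro: ennreal_leI)
    then have "ennreal (pmf Q \<omega>) * (indicator Bad (fst \<omega>) * ennreal (LL Q \<omega>)) \<le>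
        ennreal (pmf Q \<omega>) * (ennreal (LL Q \<omega>) * indicator {\<omega>. c \<le> LL Q \<omega>} \<omega> + ennreal c * indicator Bad (fst \<omega>))"
      by (rule mult_left_mono) simp
    then show "ennreal (pmf Q \<omega>) * (indicator Bad (fst \<omega>) * ennreal (LL Q \<omega>)) \<le>
        ennreal (pmf Q \<omega>) * (ennreal (LL Q \<omega>) * indicator {\<omega>. c \<le> LL Q \<omega>} \<omega>)
        + ennreal c * (ennreal (pmf Q \<omega>) * (indicator Bad (fst \<omega>) * 1))"
      by (simp add: distrib_left ac_simps)
  qed
  also have "\<dots> = (\<integral>\<^sup>+\<omega>. ennreal (LL Q \<omega>) * indicator {\<omega>. c \<le> LL Q \<omega>} \<omega> \<partial>measure_pmf Q)
      + ennreal c * (\<integral>\<^sup>+x. indicator Bad x * ennreal (pX Q x) \<partial>count_space UNIV)"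
  proof -
    have "(\<integral>\<^sup>+\<omega>. ennreal (pmf Q \<omega>) * (indicator Bad (fst \<omega>) * 1) \<partial>count_space UNIV)
      = (\<integral>\<^sup>+x. indicator Bad x * ennreal (pX Q x) \<partial>count_space UNIV)"
      using sum_split[of Q "indicator Bad" "\<lambda>_. 1"] by (simp add: pX_sum)
    then show ?thesis
      by (simp add: nn_integral_add nn_integral_cmult nn_integral_measure_pmf del: mult_1_right)
  qed
  also have "(\<integral>\<^sup>+x. indicator Bad x * ennreal (pX Q x) \<partial>count_space UNIV) \<le>
       (\<integral>\<^sup>+x. ennreal (1 / \<epsilon>) * Aset Q x b \<partial>count_space UNIV)"
  proof (rule nn_integral_mono)
    fix x
    show "indicator Bad x * ennreal (pX Q x) \<le> ennreal (1 / \<epsilon>) * Aset Q x b"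
    proof (cases "x \<in> Bad")
      case True
      then have "pX Q x \<le> (1 / \<epsilon>) * enn2real (Aset Q x b)" unfolding Bad_def using e0
        by (simp add: field_simps)
      then have "ennreal (pX Q x) \<le> ennreal ((1 / \<epsilon>) * enn2real (Aset Q x b))" by (rule ennreal_leI)
      also have "\<dots> = ennreal (1 / \<epsilon>) * Aset Q x b"
      proof -
        have "ennreal ((1 / \<epsilon>) * enn2real (Aset Q x b)) = ennreal (1 / \<epsilon>) * ennreal (enn2real (Aset Q x b))"
          using e0 by (subst ennreal_mult[symmetric]) auto
        then show ?thesis by simp
      qed
      finally show ?thesis using True by simp
    qed simp
  qed
  also have "\<dots> = ennreal (1 / \<epsilon>) * emeasure (measure_pmf Q) {\<omega>. b < LL Q \<omega>}"
    by (simp add: nn_integral_cmult int_Aset)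
  finally show ?thesis
    by (simp add: add_left_mono mult_left_mono)
qed

end


lemma Tot_upper:
  assumes c: "0 \<le> c"
  shows "(\<integral>\<^sup>+\<omega>. ennreal (LL Q \<omega>) \<partial>measure_pmf Q) \<le> ennreal b +
    ((\<integral>\<^sup>+\<omega>. ennreal (LL Q \<omega>) * indicator {\<omega>. c \<le> LL Q \<omega>} \<omega> \<partial>measure_pmf Q)
      + ennreal c * emeasure (measure_pmf Q) {\<omega>. b < LL Q \<omega>})"
proof -
  have "(\<integral>\<^sup>+\<omega>. ennreal (LL Q \<omega>) \<partial>measure_pmf Q) \<le> (\<integral>\<^sup>+\<omega>. ennreal b +
      (ennreal (LL Q \<omega>) * indicator {\<omega>. c \<le> LL Q \<omega>} \<omega> + ennreal c * indicator {\<omega>. b < LL Q \<omega>} \<omega>) \<partial>measure_pmf Q)"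
  proof (rule nn_integral_mono)
    fix \<omega>
    show "ennreal (LL Q \<omega>) \<le> ennreal b +
      (ennreal (LL Q \<omega>) * indicator {\<omega>. c \<le> LL Q \<omega>} \<omega> + ennreal c * indicator {\<omega>. b < LL Q \<omega>} \<omega>)"
    proof (cases "LL Q \<omega> \<le> b")
      case True then show ?thesis by (simp add: add_increasing2 ennreal_leI)
    next
      case False
      then show ?thesis
        by (cases "c \<le> LL Q \<omega>") (auto simp: add_increasing ennreal_leI split: split_indicator)
    qed
  qed
  also have "\<dots> = ennreal b + ((\<integral>\<^sup>+\<omega>. ennreal (LL Q \<omega>) * indicator {\<omega>. c \<le> LL Q \<omega>} \<omega> \<partial>measure_pmf Q)
      + ennreal c * emeasure (measure_pmf Q) {\<omega>. b < LL Q \<omega>})"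
    by (simp add: nn_integral_add nn_integral_cmult measure_pmf.emeasure_space_1)
  finally show ?thesis .
qed

lemma Tot_lower:
  "ennreal b \<le> (\<integral>\<^sup>+\<omega>. ennreal (LL Q \<omega>) \<partial>measure_pmf Q) + ennreal b * emeasure (measure_pmf Q) {\<omega>. LL Q \<omega> \<le> b}"
proof -
  have "ennreal b = (\<integral>\<^sup>+\<omega>. ennreal b \<partial>measure_pmf Q)"
    by (simp add: measure_pmf.emeasure_space_1)
  also have "\<dots> \<le> (\<integral>\<^sup>+\<omega>. ennreal (LL Q \<omega>) + ennreal b * indicator {\<omega>. LL Q \<omega> \<le> b} \<omega> \<partial>measure_pmf Q)"
    by (rule nn_integral_mono) (auto split: split_indicator simp: add_increasing ennreal_leI)
  also have "\<dots> = (\<integral>\<^sup>+\<omega>. ennreal (LL Q \<omega>) \<partial>measure_pmf Q) + ennreal b * emeasure (measure_pmf Q) {\<omega>. LL Q \<omega> \<le> b}"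
    by (simp add: nn_integral_add nn_integral_cmult)
  finally show ?thesis .
qed

lemma Aset_Bset:
  "Aset Q x b + (\<integral>\<^sup>+y. ennreal (pmf Q (x, y)) * indicator {\<omega>. LL Q \<omega> \<le> b} (x, y) \<partial>count_space UNIV)
    = ennreal (pX Q x)"
  unfolding Aset_Iset pX_sum
  by (subst nn_integral_add[symmetric]) (auto intro!: nn_integral_cong split: split_indicator)

context
  fixes Q :: "('a \<times> 'b) pmf" and \<epsilon> :: real
  assumes e0: "0 < \<epsilon>" and e1: "\<epsilon> < 1"
    and Tfin: "(\<integral>\<^sup>+\<omega>. ennreal (LL Q \<omega>) \<partial>measure_pmf Q) < \<infinity>"
begin

lemma SS_lower:
  assumes b: "0 \<le> b"
  shows "ennreal b \<le> SS \<epsilon> Q + ennreal b * (ennreal (1 / (1 - \<epsilon>)) * emeasure (measure_pmf Q) {\<omega>. LL Q \<omega> \<le> b})"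
proof -
  define Bx where "Bx x = (\<integral>\<^sup>+y. ennreal (pmf Q (x, y)) * indicator {\<omega>. LL Q \<omega> \<le> b} (x, y) \<partial>count_space UNIV)" for x
  have Mf: "Mx Q x < \<infinity>" for x using Mx_le_Tot[of Q x] Tfin by (rule le_less_trans)
  have pw: "ennreal (pX Q x) * ennreal b \<le> ennreal (pX Q x * hbar \<epsilon> Q x) + ennreal b * (ennreal (1 / (1 - \<epsilon>)) * Bx x)" for x
  proof (cases "pX Q x = 0")
    case False
    then have p: "0 < pX Q x" using pX_nonneg[of Q x] by linarith
    show ?thesis
    proof (cases "\<epsilon> * pX Q x < enn2real (Aset Q x b)")
      case True
      then have "b \<le> hbar \<epsilon> Q x" by (rule hbar_lower[OF p e0 e1 Mf])
      then have "pX Q x * b \<le> pX Q x * hbar \<epsilon> Q x" using p by (simp add: mult_left_mono)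
      then have "ennreal (pX Q x) * ennreal b \<le> ennreal (pX Q x * hbar \<epsilon> Q x)"
        using p b by (simp add: ennreal_mult[symmetric] ennreal_leI)
      then show ?thesis by (simp add: add_increasing2)
    next
      case False
      have AB: "Aset Q x b + Bx x = ennreal (pX Q x)" unfolding Bx_def by (rule Aset_Bset)
      then have Bf: "Bx x < \<infinity>" by (metis add.commute ennreal_less_top infinity_ennreal_def le_iff_add order_le_less_trans)
      have "enn2real (Aset Q x b) + enn2real (Bx x) = pX Q x"
        using AB Bf by (subst enn2real_plus[symmetric]) auto
      then have "pX Q x \<le> (1 / (1 - \<epsilon>)) * enn2real (Bx x)"
        using False e1 by (simp add: field_simps)
      then have "ennreal (pX Q x) \<le> ennreal ((1 / (1 - \<epsilon>)) * enn2real (Bx x))" by (rule ennreal_leI)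
      also have "\<dots> = ennreal (1 / (1 - \<epsilon>)) * Bx x"
      proof -
        have "ennreal ((1 / (1 - \<epsilon>)) * enn2real (Bx x)) = ennreal (1 / (1 - \<epsilon>)) * ennreal (enn2real (Bx x))"
          using e1 by (subst ennreal_mult[symmetric]) auto
        then show ?thesis using Bf by simp
      qed
      finally have "ennreal (pX Q x) * ennreal b \<le> ennreal b * (ennreal (1 / (1 - \<epsilon>)) * Bx x)"
        by (simp add: mult.commute mult_left_mono)
      then show ?thesis by (simp add: add_increasing)
    qed
  qed simp
  have "ennreal b = (\<integral>\<^sup>+x. ennreal (pX Q x) * ennreal b \<partial>count_space UNIV)"
    by (simp add: nn_integral_multc int_pX)
  also have "\<dots> \<le> (\<integral>\<^sup>+x. ennreal (pX Q x * hbar \<epsilon> Q x) + ennreal b * (ennreal (1 / (1 - \<epsilon>)) * Bx x) \<partial>count_space UNIV)"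
    by (rule nn_integral_mono) (rule pw)
  also have "\<dots> = SS \<epsilon> Q + ennreal b * (ennreal (1 / (1 - \<epsilon>)) * emeasure (measure_pmf Q) {\<omega>. LL Q \<omega> \<le> b})"
    unfolding SS_def Bx_def by (simp add: nn_integral_add nn_integral_cmult int_Iset)
  finally show ?thesis .
qed

end


lemma cond_entropy_Tot: "cond_entropy Q = enn2real (\<integral>\<^sup>+\<omega>. ennreal (LL Q \<omega>) \<partial>measure_pmf Q)"
proof -
  have "cond_entropy Q = integral\<^sup>L (measure_pmf Q) (LL Q)"
    unfolding cond_entropy_def LL_def by simp
  also have "\<dots> = enn2real (\<integral>\<^sup>+\<omega>. ennreal (LL Q \<omega>) \<partial>measure_pmf Q)"
    by (rule integral_eq_nn_integral) (auto simp: LL_nonneg)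
  finally show ?thesis .
qed

lemma ennreal_combo:
  fixes a b c d e :: real
  assumes "0 \<le> a" "0 \<le> b" "0 \<le> c" "0 \<le> d" "0 \<le> e"
  shows "ennreal a + ennreal b * (ennreal c + ennreal d * (ennreal b * ennreal e)) = ennreal (a + b * (c + d * (b * e)))"
  using assms by (simp add: ennreal_plus ennreal_mult)

context
  fixes Q :: "('a \<times> 'b) pmf" and k t u :: real
  assumes k: "0 < k" and t: "0 \<le> t" and u: "0 \<le> u"
    and UIf: "(\<integral>\<^sup>+\<omega>. ennreal (LL Q \<omega> / k * indicator {\<omega>. u \<le> LL Q \<omega> / k} \<omega>) \<partial>measure_pmf Q) < \<infinity>"
begin

private abbreviation "UIq \<equiv> (\<integral>\<^sup>+\<omega>. ennreal (LL Q \<omega> / k * indicator {\<omega>. u \<le> LL Q \<omega> / k} \<omega>) \<partial>measure_pmf Q)"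
private abbreviation "U \<equiv> enn2real UIq"
private abbreviation "p1 \<equiv> measure (measure_pmf Q) {\<omega>. t < LL Q \<omega> / k}"
private abbreviation "p2 \<equiv> measure (measure_pmf Q) {\<omega>. LL Q \<omega> / k \<le> t}"

lemma UIq_eq: "UIq = ennreal U" using UIf by simp

lemma U_nonneg: "0 \<le> U" by simp

lemma scale_UI:
  "(\<integral>\<^sup>+\<omega>. ennreal (LL Q \<omega>) * indicator {\<omega>. k * u \<le> LL Q \<omega>} \<omega> \<partial>measure_pmf Q) = ennreal (k * U)"
proof -
  have "(\<integral>\<^sup>+\<omega>. ennreal (LL Q \<omega>) * indicator {\<omega>. k * u \<le> LL Q \<omega>} \<omega> \<partial>measure_pmf Q)
      = (\<integral>\<^sup>+\<omega>. ennreal k * ennreal (LL Q \<omega> / k * indicator {\<omega>. u \<le> LL Q \<omega> / k} \<omega>) \<partial>measure_pmf Q)"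
    using k by (intro nn_integral_cong) (auto split: split_indicator simp: ennreal_mult[symmetric] LL_nonneg field_simps)
  also have "\<dots> = ennreal k * UIq" by (rule nn_integral_cmult) simp
  also have "\<dots> = ennreal (k * U)" using k by (subst UIq_eq) (simp add: ennreal_mult)
  finally show ?thesis .
qed

lemma set1: "{\<omega>. k * t < LL Q \<omega>} = {\<omega>. t < LL Q \<omega> / k}" using k by (auto simp: field_simps)
lemma set2: "{\<omega>. LL Q \<omega> \<le> k * t} = {\<omega>. LL Q \<omega> / k \<le> t}" using k by (auto simp: field_simps)

lemma Tot_bound:
  "(\<integral>\<^sup>+\<omega>. ennreal (LL Q \<omega>) \<partial>measure_pmf Q) \<le> ennreal (k * (t + U + u * p1))"
proof -
  have "(\<integral>\<^sup>+\<omega>. ennreal (LL Q \<omega>) \<partial>measure_pmf Q) \<le> ennreal (k * t) + (ennreal (k * U) + ennreal (k * u) * ennreal p1)"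
    using Tot_upper[of "k * u" Q "k * t"] k u
    by (simp add: scale_UI set1 measure_pmf.emeasure_eq_measure)
  also have "\<dots> = ennreal (k * t + (k * U + (k * u) * p1))"
    using k t u by (simp add: ennreal_plus ennreal_mult)
  also have "\<dots> = ennreal (k * (t + U + u * p1))"
    by (rule arg_cong[where f=ennreal]) (simp add: algebra_simps)
  finally show ?thesis .
qed

lemma Tfin: "(\<integral>\<^sup>+\<omega>. ennreal (LL Q \<omega>) \<partial>measure_pmf Q) < \<infinity>"
  using Tot_bound by (rule le_less_trans) simp

lemma E_upper: "cond_entropy Q / k \<le> t + U + u * p1"
proof -
  have "cond_entropy Q \<le> k * (t + U + u * p1)"
    unfolding cond_entropy_Tot using Tot_bound k t u by (intro enn2real_leI) auto
  then show ?thesis using k by (simp add: field_simps)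
qed

lemma E_lower: "t - t * p2 \<le> cond_entropy Q / k"
proof -
  have "ennreal (k * t) \<le> (\<integral>\<^sup>+\<omega>. ennreal (LL Q \<omega>) \<partial>measure_pmf Q) + ennreal (k * t) * ennreal p2"
    using Tot_lower[of "k * t" Q] by (simp add: set2 measure_pmf.emeasure_eq_measure)
  then have "enn2real (ennreal (k * t)) \<le> enn2real ((\<integral>\<^sup>+\<omega>. ennreal (LL Q \<omega>) \<partial>measure_pmf Q) + ennreal (k * t) * ennreal p2)"
    using Tfin by (intro enn2real_mono) (auto simp: ennreal_mult_less_top)
  then have "k * t \<le> cond_entropy Q + k * t * p2"
    using k t Tfin by (simp add: cond_entropy_Tot enn2real_plus ennreal_mult_less_top enn2real_mult)
  then show ?thesis using k by (simp add: field_simps)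
qed

context
  fixes \<epsilon> :: real assumes e0: "0 < \<epsilon>" and e1: "\<epsilon> < 1"
begin

lemma S_upper: "smooth_Hs \<epsilon> Q / k \<le> t + (1 / \<epsilon>) * (U + u * (1 / \<epsilon>) * p1)"
proof -
  have "SS \<epsilon> Q \<le> ennreal (k * t) + ennreal (1 / \<epsilon>) * (ennreal (k * U) + ennreal (k * u) * (ennreal (1 / \<epsilon>) * ennreal p1))"
    using SS_upper[OF e0 e1 Tfin, of "k * t" "k * u"] k t u
    by (simp add: scale_UI set1 measure_pmf.emeasure_eq_measure)
  also have "\<dots> = ennreal (k * t + (1 / \<epsilon>) * ((k * U) + (k * u) * ((1 / \<epsilon>) * p1)))"
    using k t u e0 by (intro ennreal_combo) auto
  also have "\<dots> = ennreal (k * (t + (1 / \<epsilon>) * (U + u * (1 / \<epsilon>) * p1)))"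
    by (rule arg_cong[where f=ennreal]) (simp add: algebra_simps)
  finally have "smooth_Hs \<epsilon> Q \<le> k * (t + (1 / \<epsilon>) * (U + u * (1 / \<epsilon>) * p1))"
    unfolding smooth_SS[OF e0 e1 Tfin] using k t u e0 by (intro enn2real_leI) auto
  then show ?thesis using k by (simp add: field_simps)
qed

lemma S_lower: "t - t * (1 / (1 - \<epsilon>)) * p2 \<le> smooth_Hs \<epsilon> Q / k"
proof -
  have "SS \<epsilon> Q \<le> ennreal (k * t) + ennreal (1 / \<epsilon>) * (ennreal (k * U) + ennreal (k * u) * (ennreal (1 / \<epsilon>) * emeasure (measure_pmf Q) {\<omega>. k * t < LL Q \<omega>}))"
    using SS_upper[OF e0 e1 Tfin, of "k * t" "k * u"] k t u by (simp add: scale_UI)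
  also have "\<dots> < \<infinity>" by (simp add: ennreal_mult_less_top measure_pmf.emeasure_eq_measure)
  finally have SSf: "SS \<epsilon> Q < \<infinity>" .
  have "ennreal (k * t) \<le> SS \<epsilon> Q + ennreal (k * t) * (ennreal (1 / (1 - \<epsilon>)) * ennreal p2)"
    using SS_lower[OF e0 e1 Tfin, of "k * t"] k t by (simp add: set2 measure_pmf.emeasure_eq_measure)
  then have "enn2real (ennreal (k * t)) \<le> enn2real (SS \<epsilon> Q + ennreal (k * t) * (ennreal (1 / (1 - \<epsilon>)) * ennreal p2))"
    using SSf by (intro enn2real_mono) (auto simp: ennreal_mult_less_top)
  then have "k * t \<le> smooth_Hs \<epsilon> Q + k * t * ((1 / (1 - \<epsilon>)) * p2)"
    using k t SSf e1 by (simp add: smooth_SS[OF e0 e1 Tfin] enn2real_plus ennreal_mult_less_top enn2real_mult)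
  then show ?thesis using k by (simp add: field_simps)
qed

end

end

lemma abstract_conv:
  fixes X :: "nat \<Rightarrow> real" and pg pl :: "real \<Rightarrow> nat \<Rightarrow> real" and UI :: "nat \<Rightarrow> real \<Rightarrow> ennreal"
  assumes C: "0 < C" and C': "0 < C'" and H: "0 \<le> H"
    and pg0: "\<And>t n. 0 \<le> pg t n" and pl0: "\<And>t n. 0 \<le> pl t n"
    and SC1: "\<And>t. H < t \<Longrightarrow> (pg t \<longlongrightarrow> 0) sequentially"
    and SC2: "\<And>t. t < H \<Longrightarrow> (pl t \<longlongrightarrow> 0) sequentially"
    and UIc: "\<And>e. 0 < e \<Longrightarrow> \<exists>u\<ge>0. \<forall>n\<ge>1. UI n u < ennreal e"
    and up: "\<And>n t u. 1 \<le> n \<Longrightarrow> 0 \<le> t \<Longrightarrow> 0 \<le> u \<Longrightarrow> UI n u < \<infinity> \<Longrightarrow>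
               X n \<le> t + C * (enn2real (UI n u) + u * C * pg t n)"
    and lo: "\<And>n t u. 1 \<le> n \<Longrightarrow> 0 \<le> t \<Longrightarrow> 0 \<le> u \<Longrightarrow> UI n u < \<infinity> \<Longrightarrow>
               t - t * C' * pl t n \<le> X n"
  shows "X \<longlonglongrightarrow> H"
proof (rule order_tendstoI)
  fix a assume a: "H < a"
  define r where "r = a - H"
  have r: "0 < r" using a by (simp add: r_def)
  obtain u where u: "0 \<le> u" "\<And>n. 1 \<le> n \<Longrightarrow> UI n u < ennreal (r / (4 * C))"
    using UIc[of "r / (4 * C)"] r C by auto
  have "\<forall>\<^sub>F n in sequentially. pg (H + r / 4) n < r / (4 * C * C * (u + 1))"
    using SC1[of "H + r / 4"] r C u by (intro order_tendstoD(2)) auto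
  moreover have "\<forall>\<^sub>F n in sequentially. 1 \<le> n" by simp
  ultimately show "\<forall>\<^sub>F n in sequentially. X n < a"
  proof eventually_elim
    case (elim n)
    have Uf: "UI n u < \<infinity>" using u(2)[OF elim(2)] by (rule less_trans) simp
    have U: "enn2real (UI n u) < r / (4 * C)"
    proof -
      have "ennreal (enn2real (UI n u)) < ennreal (r / (4 * C))" using u(2)[OF elim(2)] Uf by simp
      then show ?thesis by (simp add: ennreal_less_iff)
    qed
    have X: "X n \<le> (H + r / 4) + C * (enn2real (UI n u) + u * C * pg (H + r / 4) n)"
      using up[OF elim(2) _ u(1) Uf] H r by simp
    have 1: "C * enn2real (UI n u) < r / 4" using U C by (simp add: field_simps)
    have D: "0 < 4 * C * C * (u + 1)" using C u by (simp add: add_nonneg_pos)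
    have P: "pg (H + r / 4) n * (4 * C * C * (u + 1)) < r"
      using elim(1) D by (simp add: pos_less_divide_eq)
    have "C * C * u * pg (H + r / 4) n \<le> C * C * (u + 1) * pg (H + r / 4) n"
      using C pg0[of "H + r / 4" n] by (intro mult_right_mono) auto
    then have 2: "C * C * u * pg (H + r / 4) n \<le> r / 4" using P by (simp add: algebra_simps)
    have "X n \<le> H + r / 4 + C * enn2real (UI n u) + C * C * u * pg (H + r / 4) n"
      using X by (simp add: algebra_simps)
    also have "\<dots> < a" using 1 2 r r_def by linarith
    finally show ?case .
  qed
next
  fix a assume a: "a < H"
  obtain u where u: "0 \<le> u" "\<And>n. 1 \<le> n \<Longrightarrow> UI n u < ennreal 1"
    using UIc[of 1] by auto
  have Uf: "UI n u < \<infinity>" if "1 \<le> n" for n using less_trans[OF u(2)[OF that] ennreal_less_top[of 1]] by simp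
  show "\<forall>\<^sub>F n in sequentially. a < X n"
  proof (cases "a < 0")
    case True
    have "\<forall>\<^sub>F n in sequentially. 1 \<le> n" by simp
    then show ?thesis
    proof eventually_elim
      case (elim n)
      have "0 - 0 * C' * pl 0 n \<le> X n" using lo[OF elim _ u(1) Uf[OF elim], of 0] by simp
      with True show ?case by simp
    qed
  next
    case False
    define r where "r = H - a"
    define t where "t = (H + a) / 2"
    have r: "0 < r" using a by (simp add: r_def)
    have t: "0 < t" "t < H" using a False by (auto simp: t_def)
    have "\<forall>\<^sub>F n in sequentially. pl t n < r / (2 * C' * (H + 1))"
      using SC2[OF t(2)] r C' H by (intro order_tendstoD(2)) auto
    moreover have "\<forall>\<^sub>F n in sequentially. 1 \<le> n" by simp
    ultimately show ?thesis
    proof eventually_elim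
      case (elim n)
      have X: "t - t * C' * pl t n \<le> X n" using lo[OF elim(2) _ u(1) Uf[OF elim(2)]] t by simp
      have D: "0 < 2 * C' * (H + 1)" using C' H by (simp add: add_nonneg_pos)
      have P: "pl t n * (2 * C' * (H + 1)) < r" using elim(1) D by (simp add: pos_less_divide_eq)
      have "t * (pl t n * (2 * C' * (H + 1))) < t * r" using P t by (intro mult_strict_left_mono) auto
      also have "\<dots> \<le> (H + 1) * r" using t r by (intro mult_right_mono) auto
      finally have "(t * C' * pl t n) * (2 * (H + 1)) < (r / 2) * (2 * (H + 1))" by (simp add: algebra_simps)
      then have "t * C' * pl t n < r / 2" by (rule mult_right_less_imp_less) (use H in simp)
      then show ?case using X by (simp add: r_def t_def field_simps)
    qed
  qed
qed


lemma Zn_LL: "Zn P n \<omega> = LL (P n) \<omega> / real n"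
  by (cases \<omega>) (simp add: Zn_def LL_def)

lemma Zn_nonneg: "0 \<le> Zn P n \<omega>"
  by (simp add: Zn_LL LL_nonneg)

lemma UI_eq:
  "(\<integral>\<^sup>+ z. ennreal (\<bar>z\<bar> * indicator {z. \<bar>z\<bar> \<ge> u} z) \<partial>measure_pmf (map_pmf (Zn P n) (P n)))
   = (\<integral>\<^sup>+\<omega>. ennreal (LL (P n) \<omega> / real n * indicator {\<omega>. u \<le> LL (P n) \<omega> / real n} \<omega>) \<partial>measure_pmf (P n))"
  unfolding nn_integral_map_pmf
  by (rule nn_integral_cong) (simp add: Zn_LL LL_nonneg split: split_indicator)

theorem theorem9:
  fixes P :: "nat \<Rightarrow> ('a::countable list \<times> 'b::countable list) pmf"
    and \<epsilon> :: real
  assumes "general_source P"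
    and "uniformly_integrable P"
    and "spec_inf_cond_entropy P = spec_sup_cond_entropy P"
    and "0 < \<epsilon>" and "\<epsilon> < 1"
  shows "\<exists>H::real. (\<lambda>n. cond_entropy (P n) / real n) \<longlonglongrightarrow> H
           \<and> (\<lambda>n. smooth_Hs \<epsilon> (P n) / real n) \<longlonglongrightarrow> H"
proof -
  note e0 = assms(4) and e1 = assms(5)
  define UI where "UI n u = (\<integral>\<^sup>+\<omega>. ennreal (LL (P n) \<omega> / real n * indicator {\<omega>. u \<le> LL (P n) \<omega> / real n} \<omega>) \<partial>measure_pmf (P n))" for n u
  define pg where "pg t n = measure (measure_pmf (P n)) {\<omega>. t < LL (P n) \<omega> / real n}" for t n
  define pl where "pl t n = measure (measure_pmf (P n)) {\<omega>. LL (P n) \<omega> / real n \<le> t}" for t n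
  have UIc: "\<exists>u\<ge>0. \<forall>n\<ge>1. UI n u < ennreal e" if e: "0 < e" for e
  proof -
    have "((\<lambda>u::real. SUP n\<in>{1..}. UI n u) \<longlongrightarrow> 0) at_top"
      using assms(2) unfolding uniformly_integrable_def UI_eq UI_def .
    then have "\<forall>\<^sub>F u in at_top. (SUP n\<in>{1..}. UI n u) < ennreal e"
      using e by (intro order_tendstoD(2)) auto
    then obtain N where N: "\<And>u. N \<le> u \<Longrightarrow> (SUP n\<in>{1..}. UI n u) < ennreal e"
      by (auto simp: eventually_at_top_linorder)
    show ?thesis
    proof (intro exI[of _ "max N 0"] conjI allI impI)
      fix n :: nat assume "1 \<le> n"
      then have "UI n (max N 0) \<le> (SUP n\<in>{1..}. UI n (max N 0))" by (intro SUP_upper) auto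
      also have "\<dots> < ennreal e" by (rule N) simp
      finally show "UI n (max N 0) < ennreal e" .
    qed simp
  qed
  have pg_Z: "pg t n = measure (measure_pmf (P n)) {\<omega>. Zn P n \<omega> > t}" for t n
    by (simp add: pg_def Zn_LL)
  have pl_le: "pl t n \<le> measure (measure_pmf (P n)) {\<omega>. Zn P n \<omega> < t'}" if "t < t'" for t t' n
    unfolding pl_def using that by (intro measure_pmf.finite_measure_mono) (auto simp: Zn_LL)
  have Eup: "cond_entropy (P n) / real n \<le> t + 1 * (enn2real (UI n u) + u * 1 * pg t n)"
    if "1 \<le> n" "0 \<le> t" "0 \<le> u" "UI n u < \<infinity>" for n t u
    using E_upper[of "real n" t u "P n"] that by (simp add: UI_def pg_def)
  have Elo: "t - t * 1 * pl t n \<le> cond_entropy (P n) / real n"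
    if "1 \<le> n" "0 \<le> t" "0 \<le> u" "UI n u < \<infinity>" for n t u
    using E_lower[of "real n" t u "P n"] that by (simp add: UI_def pl_def)
  have Sup': "smooth_Hs \<epsilon> (P n) / real n \<le> t + (1 / \<epsilon>) * (enn2real (UI n u) + u * (1 / \<epsilon>) * pg t n)"
    if "1 \<le> n" "0 \<le> t" "0 \<le> u" "UI n u < \<infinity>" for n t u
    using S_upper[of "real n" t u "P n" \<epsilon>] that e0 e1 by (simp add: UI_def pg_def)
  have Slo: "t - t * (1 / (1 - \<epsilon>)) * pl t n \<le> smooth_Hs \<epsilon> (P n) / real n"
    if "1 \<le> n" "0 \<le> t" "0 \<le> u" "UI n u < \<infinity>" for n t u
    using S_lower[of "real n" t u "P n" \<epsilon>] that e0 e1 by (simp add: UI_def pl_def)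
  obtain u1 where u1: "0 \<le> u1" "\<And>n. 1 \<le> n \<Longrightarrow> UI n u1 < ennreal 1"
    using UIc[of 1] by auto
  have u1f: "UI n u1 < \<infinity>" if "1 \<le> n" for n
    using less_trans[OF u1(2)[OF that] ennreal_less_top[of 1]] by simp
  define K where "K = 2 * u1 + 1"
  have Ebound: "cond_entropy (P n) / real n \<le> K" if n: "1 \<le> n" for n
  proof -
    have "enn2real (UI n u1) < 1"
    proof -
      have "ennreal (enn2real (UI n u1)) < ennreal 1" using u1(2)[OF n] u1f[OF n] by simp
      then show ?thesis by (simp add: ennreal_less_iff)
    qed
    moreover have "u1 * pg u1 n \<le> u1 * 1"
      using u1 by (intro mult_left_mono) (auto simp: pg_def)
    ultimately show ?thesis using Eup[OF n u1(1) u1(1) u1f[OF n]] by (simp add: K_def)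
  qed
  define h where "h = spec_inf_cond_entropy P"
  have hsup: "spec_sup_cond_entropy P = h" using assms(3) h_def by simp
  have h0: "0 \<le> h"
  proof -
    have e: "{\<omega>. Zn P n \<omega> < 0} = {}" for n using Zn_nonneg[of P n] by (auto simp: not_less)
    have "(\<lambda>n. measure_pmf.prob (P n) {\<omega>. Zn P n \<omega> < 0}) = (\<lambda>_. 0)" by (simp only: e) simp
    then have "(\<lambda>n. measure_pmf.prob (P n) {\<omega>. Zn P n \<omega> < 0}) \<longlonglongrightarrow> 0" by simp
    then have "ereal 0 \<in> {ereal \<beta> | \<beta>. (\<lambda>n. measure_pmf.prob (P n) {\<omega>. Zn P n \<omega> < \<beta>}) \<longlonglongrightarrow> 0}"
      by auto
    then have "ereal 0 \<le> h" unfolding h_def spec_inf_cond_entropy_def by (rule Sup_upper)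
    then show ?thesis by (simp add: zero_ereal_def)
  qed
  have hfin: "h \<noteq> \<infinity>"
  proof
    assume "h = \<infinity>"
    then have "ereal (4 * K + 4) < Sup {ereal \<beta> | \<beta>. (\<lambda>n. measure_pmf.prob (P n) {\<omega>. Zn P n \<omega> < \<beta>}) \<longlonglongrightarrow> 0}"
      unfolding h_def spec_inf_cond_entropy_def by simp
    then obtain \<beta> where b: "4 * K + 4 < \<beta>" "(\<lambda>n. measure_pmf.prob (P n) {\<omega>. Zn P n \<omega> < \<beta>}) \<longlonglongrightarrow> 0"
      by (auto simp: less_Sup_iff)
    then have "\<forall>\<^sub>F n in sequentially. measure_pmf.prob (P n) {\<omega>. Zn P n \<omega> < \<beta>} < 1 / 2"
      by (intro order_tendstoD(2)) auto
    then obtain N where N: "\<And>n. N \<le> n \<Longrightarrow> measure_pmf.prob (P n) {\<omega>. Zn P n \<omega> < \<beta>} < 1 / 2"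
      by (auto simp: eventually_sequentially)
    define n where "n = max N 1"
    have n: "1 \<le> n" "N \<le> n" by (auto simp: n_def)
    have K0: "0 \<le> K" using u1 by (simp add: K_def)
    have b0: "0 \<le> \<beta> / 2" using b K0 by simp
    have p: "pl (\<beta> / 2) n < 1 / 2"
      using pl_le[of "\<beta> / 2" \<beta> n] N[OF n(2)] b K0 by simp
    have "\<beta> / 2 * pl (\<beta> / 2) n \<le> \<beta> / 2 * (1 / 2)"
      using p b0 by (intro mult_left_mono) auto
    moreover have "\<beta> / 2 - \<beta> / 2 * 1 * pl (\<beta> / 2) n \<le> K"
      using Elo[OF n(1) b0 u1(1) u1f[OF n(1)]] Ebound[OF n(1)] by linarith
    ultimately show False using b by simp
  qed
  define H where "H = real_of_ereal h"
  have hH: "h = ereal H" using h0 hfin unfolding H_def by (cases h) auto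
  have H0: "0 \<le> H" using h0 hH by simp
  have SC1: "(pg t \<longlongrightarrow> 0) sequentially" if t: "H < t" for t
  proof -
    have "Inf {ereal \<alpha> | \<alpha>. (\<lambda>n. measure_pmf.prob (P n) {\<omega>. Zn P n \<omega> > \<alpha>}) \<longlonglongrightarrow> 0} < ereal t"
      using hsup hH t unfolding spec_sup_cond_entropy_def by simp
    then obtain \<alpha> where a: "\<alpha> < t" "(\<lambda>n. measure_pmf.prob (P n) {\<omega>. Zn P n \<omega> > \<alpha>}) \<longlonglongrightarrow> 0"
      by (auto simp: Inf_less_iff)
    show ?thesis
    proof (rule tendsto_sandwich[OF _ _ tendsto_const a(2)])
      show "\<forall>\<^sub>F n in sequentially. 0 \<le> pg t n" by (simp add: pg_def)
      show "\<forall>\<^sub>F n in sequentially. pg t n \<le> measure_pmf.prob (P n) {\<omega>. Zn P n \<omega> > \<alpha>}"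
        unfolding pg_Z using a(1) by (intro always_eventually allI measure_pmf.finite_measure_mono) auto
    qed
  qed
  have SC2: "(pl t \<longlongrightarrow> 0) sequentially" if t: "t < H" for t
  proof -
    have "ereal t < Sup {ereal \<beta> | \<beta>. (\<lambda>n. measure_pmf.prob (P n) {\<omega>. Zn P n \<omega> < \<beta>}) \<longlonglongrightarrow> 0}"
      using hH t unfolding h_def spec_inf_cond_entropy_def by simp
    then obtain \<beta> where b: "t < \<beta>" "(\<lambda>n. measure_pmf.prob (P n) {\<omega>. Zn P n \<omega> < \<beta>}) \<longlonglongrightarrow> 0"
      by (auto simp: less_Sup_iff)
    show ?thesis
    proof (rule tendsto_sandwich[OF _ _ tendsto_const b(2)])
      show "\<forall>\<^sub>F n in sequentially. 0 \<le> pl t n" by (simp add: pl_def)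
      show "\<forall>\<^sub>F n in sequentially. pl t n \<le> measure_pmf.prob (P n) {\<omega>. Zn P n \<omega> < \<beta>}"
        using pl_le[OF b(1)] by (intro always_eventually allI) auto
    qed
  qed
  have E: "(\<lambda>n. cond_entropy (P n) / real n) \<longlonglongrightarrow> H"
    by (rule abstract_conv[where C=1 and C'=1 and pg=pg and pl=pl and UI=UI, OF _ _ H0 _ _ SC1 SC2 UIc Eup Elo])
       (auto simp: pg_def pl_def)
  have S: "(\<lambda>n. smooth_Hs \<epsilon> (P n) / real n) \<longlonglongrightarrow> H"
    by (rule abstract_conv[where C="1 / \<epsilon>" and C'="1 / (1 - \<epsilon>)" and pg=pg and pl=pl and UI=UI, OF _ _ H0 _ _ SC1 SC2 UIc Sup' Slo])
       (auto simp: e0 e1 pg_def pl_def)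
  from E S show ?thesis by blast
qed

end
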